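(* Let Assumptions (A1) and (A3) below hold. Then there exists $\alpha_1\in\mathcal K_\infty$ such that for all $\varepsilon>0$, all $T\in\mathbb{N}$, all $\hat x\in\mathbb{X}$ and all $\hat u\in\mathbb{U}^T(\hat x)$ with $\|(x_{\hat u}(k,\hat x),\hat u(k))\|_{\Pi^\star}\le\varepsilon$ for all $k\in\{0,\dots,T-1\}$, $$\sum_{k=0}^{T-1}\ell(x_{\hat u}(k,\hat x),\hat u(k))\le(T+p^\star-1)\ell^\star+T\alpha_1(\varepsilon).$$
   Context: System $x(k+1)=f(x(k),u(k))$ with constraint sets $\mathbb{X}\subset\mathbb{R}^n$, $\mathbb{U}\subset\mathbb{R}^m$ and stage cost $\ell:\mathbb{X}\times\mathbb{U}\to\mathbb{R}$, which is assumed non-negative. For $u\in\mathbb{U}^T$, $x_u(0,x)=x$, $x_u(k+1,x)=f(x_u(k,x),u(k))$; $\mathbb{U}^T(x)$ is the set of $u\in\mathbb{U}^T$ with $x_u(k,x)\in\mathbb{X}$ for $k=0,\dots,T$. A feasible $p$-periodic orbit is $\Pi\in(\mathbb{X}\times\mathbb{U})^p$ with $\Pi_\mathbb{X}([k+1]_p)=f(\Pi(k))$ ($[k]_p$ = $k$ mod $p$); $\|(x,u)\|_\Pi:=\min_k\|(x,u)-\Pi(k)\|$; $\ell^\star:=\inf$ over all feasible periodic orbits of $\frac1p\sum_{k=0}^{p-1}\ell(\Pi(k))$; $\Pi^\star$ is a fixed feasible $p^\star$-periodic orbit attaining $\ell^\star$. (A1) $f,\ell$ continuous, $\mathbb{X},\mathbb{U}$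 compact. (A3) There are $\lambda:\mathbb{X}\to\mathbb{R}$, $\bar\lambda$ with $|\lambda|\le\bar\lambda$ on $\mathbb{X}$, and $\underline\alpha_{\tilde\ell}\in\mathcal K_\infty$ with $\ell(x,u)-\ell^\star+\lambda(x)-\lambda(f(x,u))\ge\underline\alpha_{\tilde\ell}(\|(x,u)\|_{\Pi^\star})$ for all $x\in\mathbb{X}$, $u\in\mathbb{U}^1(x)$. *)

theory Defs
  imports "HOL-Analysis.Analysis"
begin

definition Kinf :: "(real \<Rightarrow> real) \<Rightarrow> bool" where
  "Kinf \<alpha> \<longleftrightarrow> continuous_on {0..} \<alpha> \<and> \<alpha> 0 = 0 \<and> strict_mono_on {0..} \<alpha>
     \<and> filterlim \<alpha> at_top at_top"

primrec traj :: "('a \<Rightarrow> 'b \<Rightarrow> 'a) \<Rightarrow> (nat \<Rightarrow> 'b) \<Rightarrow> 'a \<Rightarrow> nat \<Rightarrow> 'a" where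
  "traj f u x 0 = x"
| "traj f u x (Suc k) = f (traj f u x k) (u k)"

text \<open>Admissible input sequences of length T from x, U^T(x); only u(0..T-1) matter.\<close>
definition admissible ::
  "('a \<Rightarrow> 'b \<Rightarrow> 'a) \<Rightarrow> 'a set \<Rightarrow> 'b set \<Rightarrow> nat \<Rightarrow> 'a \<Rightarrow> (nat \<Rightarrow> 'b) \<Rightarrow> bool" where
  "admissible f X U T x u \<longleftrightarrow> (\<forall>k<T. u k \<in> U) \<and> (\<forall>k\<le>T. traj f u x k \<in> X)"

text \<open>Feasible p-periodic orbit, given by its values Orb 0, ..., Orb (p-1).\<close>
definition feasible_orbit ::
  "('a \<Rightarrow> 'b \<Rightarrow> 'a) \<Rightarrow> 'a set \<Rightarrow> 'b set \<Rightarrow> nat \<Rightarrow> (nat \<Rightarrow> 'a \<times> 'b) \<Rightarrow> bool" where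
  "feasible_orbit f X U p Orb \<longleftrightarrow> p \<ge> 1 \<and> (\<forall>k<p. Orb k \<in> X \<times> U)
     \<and> (\<forall>k<p. fst (Orb (Suc k mod p)) = f (fst (Orb k)) (snd (Orb k)))"

definition orbit_avg :: "('a \<Rightarrow> 'b \<Rightarrow> real) \<Rightarrow> nat \<Rightarrow> (nat \<Rightarrow> 'a \<times> 'b) \<Rightarrow> real" where
  "orbit_avg ell p Orb = (\<Sum>k<p. ell (fst (Orb k)) (snd (Orb k))) / real p"

definition ell_star ::
  "('a \<Rightarrow> 'b \<Rightarrow> 'a) \<Rightarrow> 'a set \<Rightarrow> 'b set \<Rightarrow> ('a \<Rightarrow> 'b \<Rightarrow> real) \<Rightarrow> real" where
  "ell_star f X U ell = Inf {orbit_avg ell p Orb | p Orb. feasible_orbit f X U p Orb}"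

definition orbit_dist ::
  "nat \<Rightarrow> (nat \<Rightarrow> 'a::real_normed_vector \<times> 'b::real_normed_vector) \<Rightarrow> 'a \<times> 'b \<Rightarrow> real" where
  "orbit_dist p Orb z = Min ((\<lambda>k. norm (z - Orb k)) ` {..<p})"

end

theory Submission
  imports Defs
begin

lemma min_scale:
  fixes e e' s :: real
  assumes "0 < e" "e \<le> e'" "0 < s"
  shows "min 1 (e'/s) \<le> (e'/e) * min 1 (e/s)"
proof (cases "s \<le> e")
  case True
  then have "e/s \<ge> 1" using assms by simp
  moreover have "e'/e \<ge> 1" using assms by simp
  ultimately show ?thesis by simp
next
  case False
  then have "e/s < 1" using assms by simp
  then have "(e'/e) * min 1 (e/s) = e'/s" using assms by simp
  then show ?thesis by simp
qed

lemma majorant: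
  fixes b :: "real \<Rightarrow> real" and B :: real
  assumes bnd: "\<And>s. s > 0 \<Longrightarrow> 0 \<le> b s \<and> b s \<le> B"
    and lim0: "\<And>e. e > 0 \<Longrightarrow> \<exists>d>0. \<forall>s. 0 < s \<and> s < d \<longrightarrow> b s \<le> e"
  shows "\<exists>\<alpha>1. Kinf \<alpha>1 \<and> (\<forall>s>0. b s \<le> \<alpha>1 s)"
proof -
  define a where "a = (\<lambda>\<epsilon>::real. SUP s\<in>{0<..}. b s * min 1 (\<epsilon>/s))"
  have B0: "0 \<le> B" using bnd[of 1] by auto
  have ne: "{0<..} \<noteq> ({}::real set)" by (metis greaterThan_iff empty_iff zero_less_one)
  have elem: "0 \<le> b s * min 1 (\<epsilon>/s) \<and> b s * min 1 (\<epsilon>/s) \<le> B" if "\<epsilon> \<ge> 0" "s > 0" for \<epsilon> s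
  proof -
    have m0: "0 \<le> min 1 (\<epsilon>/s)" "min 1 (\<epsilon>/s) \<le> 1" using that by auto
    have "b s * min 1 (\<epsilon>/s) \<le> b s" using bnd[OF that(2)] m0 mult_left_le by blast
    then show ?thesis using bnd[OF that(2)] m0 by auto
  qed
  have bdd: "bdd_above ((\<lambda>s. b s * min 1 (\<epsilon>/s)) ` {0<..})" if "\<epsilon> \<ge> 0" for \<epsilon>
    by (rule bdd_aboveI2[where M=B]) (use elem that in auto)
  have ub: "b s * min 1 (\<epsilon>/s) \<le> a \<epsilon>" if "\<epsilon> \<ge> 0" "s > 0" for \<epsilon> s
    unfolding a_def by (rule cSUP_upper) (use that bdd in auto)
  have le: "a \<epsilon> \<le> M" if "\<And>s. s>0 \<Longrightarrow> b s * min 1 (\<epsilon>/s) \<le> M" for \<epsilon> M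
    unfolding a_def by (rule cSUP_least) (use that ne in auto)
  have a_nn: "0 \<le> a \<epsilon>" if "\<epsilon> \<ge> 0" for \<epsilon>
    using ub[OF that, of 1] elem[OF that, of 1] by linarith
  have a_B: "a \<epsilon> \<le> B" if "\<epsilon> \<ge> 0" for \<epsilon>
    using le[of \<epsilon> B] elem[OF that] by blast
  have a0: "a 0 = 0"
    using le[of 0 0] a_nn[of 0] by simp
  have a_ge: "b s \<le> a s" if "s > 0" for s
    using ub[of s s] that by simp
  have a_mono: "a \<epsilon> \<le> a \<epsilon>'" if "0 \<le> \<epsilon>" "\<epsilon> \<le> \<epsilon>'" for \<epsilon> \<epsilon>'
  proof (rule le)
    fix s :: real assume s: "s > 0"
    have "min 1 (\<epsilon>/s) \<le> min 1 (\<epsilon>'/s)" using divide_right_mono[of \<epsilon> \<epsilon>' s] that s by (auto simp: min_def)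
    then have "b s * min 1 (\<epsilon>/s) \<le> b s * min 1 (\<epsilon>'/s)" using bnd[OF s] mult_left_mono by blast
    also have "\<dots> \<le> a \<epsilon>'" using ub[of \<epsilon>' s] that s by simp
    finally show "b s * min 1 (\<epsilon>/s) \<le> a \<epsilon>'" .
  qed
  have a_scale: "a \<epsilon>' \<le> (\<epsilon>'/\<epsilon>) * a \<epsilon>" if "0 < \<epsilon>" "\<epsilon> \<le> \<epsilon>'" for \<epsilon> \<epsilon>'
  proof (rule le)
    fix s :: real assume s: "s > 0"
    have "b s * min 1 (\<epsilon>'/s) \<le> b s * ((\<epsilon>'/\<epsilon>) * min 1 (\<epsilon>/s))"
      using min_scale[OF that s] bnd[OF s] mult_left_mono by blast
    also have "\<dots> = (\<epsilon>'/\<epsilon>) * (b s * min 1 (\<epsilon>/s))" by simp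
    also have "\<dots> \<le> (\<epsilon>'/\<epsilon>) * a \<epsilon>"
      using ub[of \<epsilon> s] that s by (intro mult_left_mono) auto
    finally show "b s * min 1 (\<epsilon>'/s) \<le> (\<epsilon>'/\<epsilon>) * a \<epsilon>" .
  qed
  have lip: "\<bar>a x' - a x\<bar> \<le> (2*B/x) * \<bar>x' - x\<bar>" if "x > 0" "x' \<ge> x/2" for x x'
  proof (cases "x \<le> x'")
    case True
    have "a x' \<le> (x'/x) * a x" using a_scale[OF that(1) True] .
    moreover have "((x' - x)/x) * a x = (x'/x) * a x - a x" using that by (simp add: field_simps)
    ultimately have "a x' - a x \<le> ((x' - x)/x) * a x" by linarith
    also have "\<dots> \<le> ((x' - x)/x) * B" using a_B[of x] that True by (intro mult_left_mono) auto
    also have "\<dots> \<le> (2*B/x) * \<bar>x' - x\<bar>"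
    proof -
      have "0 \<le> B*(x'-x)/x" using B0 True that by simp
      moreover have "(2*B/x)*(x'-x) = ((x'-x)/x)*B + B*(x'-x)/x" using that by (simp add: field_simps)
      moreover have "\<bar>x' - x\<bar> = x' - x" using True by simp
      ultimately show ?thesis by linarith
    qed
    finally show ?thesis using a_mono[of x x'] that True by auto
  next
    case False
    have x'p: "x' > 0" using that by linarith
    have "a x \<le> (x/x') * a x'" using a_scale[OF x'p] False by simp
    moreover have "((x - x')/x') * a x' = (x/x') * a x' - a x'" using x'p by (simp add: field_simps)
    ultimately have "a x - a x' \<le> ((x - x')/x') * a x'" by linarith
    also have "\<dots> \<le> ((x - x')/x') * B" using a_B[of x'] x'p False by (intro mult_left_mono) auto
    also have "\<dots> \<le> (2*B/x) * \<bar>x' - x\<bar>"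
    proof -
      have "1/x' \<le> 2/x" using that x'p by (simp add: field_simps)
      then have "(x - x') * (1/x') \<le> (x - x') * (2/x)" using False by (intro mult_left_mono) auto
      then have "((x - x') * (1/x')) * B \<le> ((x - x') * (2/x)) * B" using B0 by (intro mult_right_mono) auto
      moreover have "((x - x')/x') * B = ((x - x') * (1/x')) * B" by simp
      moreover have "(2*B/x) * \<bar>x' - x\<bar> = ((x - x') * (2/x)) * B" using False by simp
      ultimately show ?thesis by linarith
    qed
    finally show ?thesis using a_mono[of x' x] x'p False by auto
  qed
  define a1 where "a1 = (\<lambda>\<epsilon>. a \<epsilon> + \<epsilon>)"
  have cont_a: "continuous_on {0..} a"
    unfolding continuous_on_iff
  proof (intro ballI allI impI)
    fix x e :: real assume x: "x \<in> {0..}" and e: "e > 0"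
    show "\<exists>d>0. \<forall>x'\<in>{0..}. dist x' x < d \<longrightarrow> dist (a x') (a x) < e"
    proof (cases "x = 0")
      case True
      obtain d where d: "d > 0" "\<forall>s. 0 < s \<and> s < d \<longrightarrow> b s \<le> e/2"
        using lim0[of "e/2"] e by auto
      define d' where "d' = e * d / (2*B + 2)"
      have d'p: "d' > 0" using d e B0 unfolding d'_def by simp
      have "dist (a x') (a x) < e" if "x' \<in> {0..}" "dist x' x < d'" for x'
      proof -
        have x': "0 \<le> x'" "x' < d'" using that True by (auto simp: dist_real_def)
        have "a x' \<le> e/2"
        proof (rule le)
          fix s :: real assume s: "s > 0"
          show "b s * min 1 (x'/s) \<le> e/2"
          proof (cases "s < d")
            case True
            then show ?thesis using d s elem[OF x'(1) s] bnd[OF s]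
              by (smt (verit) mult_left_le min.cobounded1)
          next
            case False
            have "b s * min 1 (x'/s) \<le> B * (x'/s)"
              using bnd[OF s] x' s by (intro mult_mono) auto
            also have "\<dots> \<le> B * (x'/d)" using False s x' B0 d
              by (intro mult_left_mono divide_left_mono) auto
            also have "\<dots> \<le> B * (d'/d)" using x' B0 d by (intro mult_left_mono divide_right_mono) auto
            also have "\<dots> \<le> e/2"
            proof -
              have q: "d'/d = e/(2*B+2)" unfolding d'_def using d by simp
              have "(2*B+2) = 2*(B+1)" by simp
              then have "B*(e/(2*B+2)) = (e/2)*(B/(B+1))" by simp
              then have eq: "B*(d'/d) = (e/2)*(B/(B+1))" using q by simp
              have "B/(B+1) \<le> 1" using B0 by simp
              then have "(e/2)*(B/(B+1)) \<le> e/2" using e by (intro mult_left_le) auto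
              then show ?thesis using eq by simp
            qed
            finally show ?thesis .
          qed
        qed
        then show ?thesis using a_nn[OF x'(1)] True a0 e by (simp add: dist_real_def)
      qed
      then show ?thesis using d'p by blast
    next
      case False
      then have xp: "x > 0" using x by auto
      define d where "d = min (x/2) (e * x / (2*B + 1))"
      have dp: "d > 0" using xp e B0 unfolding d_def by simp
      have "dist (a x') (a x) < e" if "x' \<in> {0..}" "dist x' x < d" for x'
      proof -
        have h: "\<bar>x' - x\<bar> < d" using that by (simp add: dist_real_def)
        then have "\<bar>x' - x\<bar> < x/2" unfolding d_def by auto
        then have "x' \<ge> x/2" by linarith
        then have "\<bar>a x' - a x\<bar> \<le> (2*B/x) * \<bar>x' - x\<bar>" using lip xp by blast
        also have "\<dots> \<le> (2*B/x) * d" using h B0 xp by (intro mult_left_mono) auto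
        also have "\<dots> \<le> (2*B/x) * (e * x / (2*B + 1))" using B0 xp unfolding d_def
          by (intro mult_left_mono) auto
        also have "\<dots> < e" using B0 xp e by (simp add: field_simps)
        finally show ?thesis by (simp add: dist_real_def)
      qed
      then show ?thesis using dp by blast
    qed
  qed
  have "Kinf a1"
    unfolding Kinf_def
  proof (intro conjI)
    show "continuous_on {0..} a1" unfolding a1_def
      by (intro continuous_intros cont_a)
    show "a1 0 = 0" using a0 unfolding a1_def by simp
    show "strict_mono_on {0..} a1" unfolding strict_mono_on_def a1_def
      using a_mono by (smt (verit) atLeast_iff)
    show "filterlim a1 at_top at_top"
      unfolding filterlim_at_top eventually_at_top_linorder
    proof
      fix Z :: real
      show "\<exists>N. \<forall>n\<ge>N. Z \<le> a1 n" unfolding a1_def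
        using a_nn by (intro exI[of _ "max Z 0"]) (smt (verit))
    qed
  qed
  moreover have "\<forall>s>0. b s \<le> a1 s" using a_ge unfolding a1_def by (smt (verit))
  ultimately show ?thesis by blast
qed


lemma od_ex:
  fixes Orb :: "nat \<Rightarrow> 'a::real_normed_vector \<times> 'b::real_normed_vector"
  assumes "p \<ge> 1" shows "\<exists>j<p. orbit_dist p Orb z = norm (z - Orb j)"
proof -
  have "orbit_dist p Orb z \<in> (\<lambda>k. norm (z - Orb k)) ` {..<p}"
    unfolding orbit_dist_def using assms by (intro Min_in) (auto simp: lessThan_empty_iff)
  then show ?thesis by auto
qed

lemma od_le:
  fixes Orb :: "nat \<Rightarrow> 'a::real_normed_vector \<times> 'b::real_normed_vector"
  assumes "j < p" shows "orbit_dist p Orb z \<le> norm (z - Orb j)"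
  unfolding orbit_dist_def using assms by (intro Min_le) auto

lemma sum_shift_mod:
  fixes g :: "nat \<Rightarrow> real"
  assumes "p \<ge> 1" shows "(\<Sum>j<p. g (Suc j mod p)) = (\<Sum>j<p. g j)"
proof -
  obtain q where q: "p = Suc q" using assms by (cases p) auto
  have "(\<Sum>j<Suc q. g (Suc j mod Suc q)) = (\<Sum>j<q. g (Suc j mod Suc q)) + g 0" by simp
  also have "(\<Sum>j<q. g (Suc j mod Suc q)) = (\<Sum>j<q. g (Suc j))" by (rule sum.cong) auto
  also have "\<dots> + g 0 = (\<Sum>j<Suc q. g j)" by (simp only: sum.lessThan_Suc_shift)
  finally show ?thesis using q by simp
qed

lemma finite_sep:
  fixes S :: "'a::metric_space set"
  assumes "finite S" shows "\<exists>\<delta>>0. \<forall>a\<in>S. \<forall>b\<in>S. dist a b < \<delta> \<longrightarrow> a = b"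
proof -
  define D where "D = insert 1 ((\<lambda>(a,b). dist a b) ` {(a,b). a \<in> S \<and> b \<in> S \<and> a \<noteq> b})"
  have fD: "finite D" unfolding D_def
    by (rule finite_insert[THEN iffD2], rule finite_imageI, rule finite_subset[of _ "S \<times> S"]) (use assms in auto)
  have "0 < Min D" using fD by (subst Min_gr_iff) (auto simp: D_def)
  moreover have "Min D \<le> dist a b" if "a \<in> S" "b \<in> S" "a \<noteq> b" for a b
    using fD that by (intro Min_le) (auto simp: D_def)
  ultimately show ?thesis by (meson not_less)
qed


theorem lemma24:
  fixes f :: "'a::euclidean_space \<Rightarrow> 'b::euclidean_space \<Rightarrow> 'a"
    and X :: "'a set" and U :: "'b set"
    and ell :: "'a \<Rightarrow> 'b \<Rightarrow> real"
    and pstar :: nat and Pistar :: "nat \<Rightarrow> 'a \<times> 'b"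
  assumes A1_f: "continuous_on (X \<times> U) (\<lambda>(x, u). f x u)"
    and A1_l: "continuous_on (X \<times> U) (\<lambda>(x, u). ell x u)"
    and A1_X: "compact X" and A1_U: "compact U"
    and l_nonneg: "\<And>x u. x \<in> X \<Longrightarrow> u \<in> U \<Longrightarrow> ell x u \<ge> 0"
    and Pistar_feas: "feasible_orbit f X U pstar Pistar"
    and Pistar_opt: "orbit_avg ell pstar Pistar = ell_star f X U ell"
    and A3: "\<exists>(lam::'a \<Rightarrow> real) lambar \<alpha>. (\<forall>x\<in>X. \<bar>lam x\<bar> \<le> lambar) \<and> Kinf \<alpha> \<and>
      (\<forall>x\<in>X. \<forall>u\<in>U. f x u \<in> X \<longrightarrow>
         ell x u - ell_star f X U ell + lam x - lam (f x u) \<ge> \<alpha> (orbit_dist pstar Pistar (x, u)))"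
  shows "\<exists>\<alpha>1. Kinf \<alpha>1 \<and>
    (\<forall>\<epsilon>>0. \<forall>T::nat. \<forall>xh\<in>X. \<forall>uh. admissible f X U T xh uh \<longrightarrow>
       (\<forall>k<T. orbit_dist pstar Pistar (traj f uh xh k, uh k) \<le> \<epsilon>) \<longrightarrow>
       (\<Sum>k<T. ell (traj f uh xh k) (uh k))
         \<le> (real T + real pstar - 1) * ell_star f X U ell + real T * \<alpha>1 \<epsilon>)"
proof -
  define ls where "ls = ell_star f X U ell"
  define xs where "xs = (\<lambda>j. fst (Pistar j))"
  define us where "us = (\<lambda>j. snd (Pistar j))"
  define sx where "sx = (\<lambda>j. Suc j mod pstar)"
  define K where "K = X \<times> U"
  define L where "L = (\<lambda>z::'a\<times>'b. ell (fst z) (snd z))"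
  define F where "F = (\<lambda>z::'a\<times>'b. f (fst z) (snd z))"
  have p1: "pstar \<ge> 1" and PiK: "\<And>k. k<pstar \<Longrightarrow> Pistar k \<in> K"
    and step: "\<And>k. k<pstar \<Longrightarrow> xs (sx k) = f (xs k) (us k)"
    using Pistar_feas unfolding feasible_orbit_def K_def xs_def us_def sx_def by auto
  have sx_lt: "\<And>k. sx k < pstar" using p1 unfolding sx_def by simp
  have Pi_eq: "\<And>k. Pistar k = (xs k, us k)" by (simp add: xs_def us_def)
  have xsX: "\<And>k. k<pstar \<Longrightarrow> xs k \<in> X" and usU: "\<And>k. k<pstar \<Longrightarrow> us k \<in> U"
    using PiK unfolding K_def xs_def us_def by (auto simp: mem_Times_iff)
  have Lnn: "\<And>z. z \<in> K \<Longrightarrow> L z \<ge> 0" by (auto simp: K_def L_def l_nonneg mem_Times_iff)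
  have sumL: "(\<Sum>k<pstar. L (Pistar k)) = real pstar * ls"
    using Pistar_opt p1 unfolding orbit_avg_def ls_def L_def by (simp add: field_simps)
  have ls_nn: "ls \<ge> 0"
  proof -
    have "0 \<le> (\<Sum>k<pstar. L (Pistar k))" using Lnn PiK by (intro sum_nonneg) auto
    then show ?thesis using sumL p1 by (simp add: zero_le_mult_iff)
  qed
  obtain lam lambar \<alpha> where Ka: "Kinf \<alpha>"
    and diss: "\<forall>x\<in>X. \<forall>u\<in>U. f x u \<in> X \<longrightarrow>
         ell x u - ls + lam x - lam (f x u) \<ge> \<alpha> (orbit_dist pstar Pistar (x, u))"
    using A3 unfolding ls_def by blast
  have \<alpha>_nn: "\<alpha> d \<ge> 0" if "d \<ge> 0" for d
  proof (cases "d = 0")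
    case True then show ?thesis using Ka by (simp add: Kinf_def)
  next
    case False
    then have "\<alpha> 0 < \<alpha> d" using Ka that unfolding Kinf_def strict_mono_on_def
      by (metis atLeast_iff order.refl order_le_neq_trans)
    then show ?thesis using Ka by (simp add: Kinf_def)
  qed
  have od_nn: "\<And>z. orbit_dist pstar Pistar z \<ge> 0" using od_ex[OF p1] by (metis norm_ge_zero)
  have dj: "0 \<le> L (Pistar j) - ls + lam (xs j) - lam (xs (sx j))" if j: "j<pstar" for j
  proof -
    have "f (xs j) (us j) \<in> X" using step[OF j] xsX sx_lt by metis
    then have "ell (xs j) (us j) - ls + lam (xs j) - lam (f (xs j) (us j)) \<ge> \<alpha> (orbit_dist pstar Pistar (xs j, us j))"
      using diss xsX[OF j] usU[OF j] by blast
    moreover have "\<alpha> (orbit_dist pstar Pistar (xs j, us j)) \<ge> 0" using \<alpha>_nn od_nn by blast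
    ultimately show ?thesis using step[OF j] by (simp add: L_def xs_def us_def)
  qed
  have sumd: "(\<Sum>j<pstar. L (Pistar j) - ls + lam (xs j) - lam (xs (sx j))) = 0"
  proof -
    have "(\<Sum>j<pstar. L (Pistar j) - ls + lam (xs j) - lam (xs (sx j)))
        = (\<Sum>j<pstar. L (Pistar j)) - real pstar * ls + (\<Sum>j<pstar. lam (xs j)) - (\<Sum>j<pstar. lam (xs (sx j)))"
      by (simp add: sum.distrib sum_subtractf)
    moreover have "(\<Sum>j<pstar. lam (xs (sx j))) = (\<Sum>j<pstar. lam (xs j))"
      unfolding sx_def using sum_shift_mod[OF p1, of "\<lambda>j. lam (xs j)"] by simp
    ultimately show ?thesis using sumL by simp
  qed
  have eqj: "L (Pistar j) = ls + lam (xs (sx j)) - lam (xs j)" if "j<pstar" for j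
  proof -
    have "\<forall>j\<in>{..<pstar}. L (Pistar j) - ls + lam (xs j) - lam (xs (sx j)) = 0"
      using sum_nonneg_eq_0_iff[of "{..<pstar}" "\<lambda>j. L (Pistar j) - ls + lam (xs j) - lam (xs (sx j))"]
        sumd dj by auto
    then have "L (Pistar j) - ls + lam (xs j) - lam (xs (sx j)) = 0" using that by blast
    then show ?thesis by linarith
  qed
  have tele: "(\<Sum>t<m. L (Pistar ((j+t) mod pstar))) = real m * ls + lam (xs ((j+m) mod pstar)) - lam (xs j)"
    if j: "j < pstar" for j m
  proof (induction m)
    case 0 then show ?case using j by simp
  next
    case (Suc m)
    have "sx ((j+m) mod pstar) = (j + Suc m) mod pstar" unfolding sx_def by (simp add: mod_Suc_eq)
    moreover have "(j+m) mod pstar < pstar" using p1 by simp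
    ultimately have "L (Pistar ((j+m) mod pstar)) = ls + lam (xs ((j + Suc m) mod pstar)) - lam (xs ((j+m) mod pstar))"
      using eqj by metis
    then show ?case using Suc by (simp add: algebra_simps)
  qed
  have claimL: "lam (xs i) - lam (xs j) \<le> (real pstar - 1) * ls" if i: "i<pstar" and j: "j<pstar" for i j
  proof -
    define m where "m = (if j < i then i - j else pstar + i - j)"
    have m1: "1 \<le> m" "m \<le> pstar" using i j unfolding m_def by auto
    have mi: "(j+m) mod pstar = i"
    proof (cases "j < i")
      case True then show ?thesis using i unfolding m_def by simp
    next
      case False
      then have "j + m = i + pstar" unfolding m_def using j by simp
      then show ?thesis using i by simp
    qed
    have "lam (xs i) - lam (xs j) = (\<Sum>t<m. L (Pistar ((j+t) mod pstar))) - real m * ls"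
      using tele[OF j, of m] mi by simp
    also have "\<dots> \<le> (\<Sum>t<pstar. L (Pistar ((j+t) mod pstar))) - real m * ls"
    proof -
      have "(\<Sum>t<m. L (Pistar ((j+t) mod pstar))) \<le> (\<Sum>t<pstar. L (Pistar ((j+t) mod pstar)))"
        using m1 p1 by (intro sum_mono2) (auto intro!: Lnn PiK)
      then show ?thesis by simp
    qed
    also have "\<dots> = real pstar * ls - real m * ls"
      using tele[OF j, of pstar] j by simp
    also have "\<dots> \<le> (real pstar - 1) * ls"
    proof -
      have "real pstar * ls - real m * ls = (real pstar - real m) * ls" by (simp add: algebra_simps)
      also have "\<dots> \<le> (real pstar - 1) * ls" using m1 ls_nn by (intro mult_right_mono) auto
      finally show ?thesis .
    qed
    finally show ?thesis .
  qed
  have cK: "compact K" unfolding K_def using A1_X A1_U by (rule compact_Times)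
  have "(\<lambda>(x, u). ell x u) = L" unfolding L_def by (auto simp: fun_eq_iff)
  then have contL: "continuous_on K L" using A1_l unfolding K_def by simp
  have "(\<lambda>(x, u). f x u) = F" unfolding F_def by (auto simp: fun_eq_iff)
  then have contF: "continuous_on K F" using A1_f unfolding K_def by simp
  have ucL: "uniformly_continuous_on K L" using compact_uniformly_continuous[OF contL cK] .
  have ucF: "uniformly_continuous_on K F" using compact_uniformly_continuous[OF contF cK] .
  have Kne: "K \<noteq> {}" using PiK p1 by auto
  obtain zM where "zM \<in> K" "\<forall>y\<in>K. L y \<le> L zM"
    using continuous_attains_sup[OF cK Kne contL] by blast
  define M where "M = L zM"
  have M: "\<And>z. z \<in> K \<Longrightarrow> L z \<le> M" using \<open>\<forall>y\<in>K. L y \<le> L zM\<close> M_def by blast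
  have M0: "0 \<le> M" using Lnn \<open>zM \<in> K\<close> M_def by blast
  obtain \<delta>S where \<delta>S: "\<delta>S > 0" "\<forall>a\<in>xs ` {..<pstar}. \<forall>b\<in>xs ` {..<pstar}. dist a b < \<delta>S \<longrightarrow> a = b"
    using finite_sep[of "xs ` {..<pstar}"] by auto
  obtain d1 where d1: "d1 > 0" "\<forall>z\<in>K. \<forall>w\<in>K. dist w z < d1 \<longrightarrow> dist (F w) (F z) < \<delta>S/2"
    using ucF \<delta>S(1) unfolding uniformly_continuous_on_def by (meson half_gt_zero)
  define \<epsilon>0 where "\<epsilon>0 = min d1 (\<delta>S/2)"
  have \<epsilon>0p: "\<epsilon>0 > 0" using d1 \<delta>S unfolding \<epsilon>0_def by simp
  define Q where "Q = (\<lambda>\<epsilon>::real. {(z,j). z\<in>K \<and> j<pstar \<and> norm (z - Pistar j) \<le> \<epsilon>})"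
  define w where "w = (\<lambda>\<epsilon>. SUP q\<in>Q \<epsilon>. L (fst q) - L (Pistar (snd q)))"
  have wbdd: "bdd_above ((\<lambda>q. L (fst q) - L (Pistar (snd q))) ` Q \<epsilon>)" for \<epsilon>
  proof (rule bdd_aboveI2[where M=M])
    fix q assume "q \<in> Q \<epsilon>"
    then show "L (fst q) - L (Pistar (snd q)) \<le> M" using M Lnn PiK unfolding Q_def
      by (smt (verit) case_prodE fst_conv mem_Collect_eq snd_conv)
  qed
  have wub: "L z - L (Pistar j) \<le> w \<epsilon>" if "z\<in>K" "j<pstar" "norm (z - Pistar j) \<le> \<epsilon>" for z j \<epsilon>
  proof -
    have "(z,j) \<in> Q \<epsilon>" using that unfolding Q_def by simp
    then show ?thesis unfolding w_def using cSUP_upper[OF _ wbdd] by fastforce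
  qed
  have wle: "w \<epsilon> \<le> c" if "\<epsilon> \<ge> 0" "\<And>z j. z\<in>K \<Longrightarrow> j<pstar \<Longrightarrow> norm (z - Pistar j) \<le> \<epsilon> \<Longrightarrow> L z - L (Pistar j) \<le> c"
    for \<epsilon> c
  proof -
    have "(Pistar 0, 0) \<in> Q \<epsilon>" using that(1) PiK p1 unfolding Q_def by simp
    then have "Q \<epsilon> \<noteq> {}" by auto
    then show ?thesis unfolding w_def by (rule cSUP_least) (use that(2) in \<open>auto simp: Q_def\<close>)
  qed
  define b where "b = (\<lambda>\<epsilon>. if \<epsilon> < \<epsilon>0 then w \<epsilon> else M)"
  have bnd: "0 \<le> b s \<and> b s \<le> M" if "s > 0" for s
  proof -
    have "0 \<le> w s" using wub[of "Pistar 0" 0 s] PiK p1 that by simp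
    moreover have "w s \<le> M" using that by (intro wle) (use M Lnn PiK in \<open>smt (verit)\<close>)+
    ultimately show ?thesis using M0 unfolding b_def by auto
  qed
  have lim0: "\<exists>d>0. \<forall>s. 0 < s \<and> s < d \<longrightarrow> b s \<le> e" if e: "e > 0" for e
  proof -
    obtain d where d: "d > 0" "\<forall>z\<in>K. \<forall>z'\<in>K. dist z' z < d \<longrightarrow> dist (L z') (L z) < e"
      using ucL e unfolding uniformly_continuous_on_def by meson
    have "b s \<le> e" if s: "0 < s" "s < min d \<epsilon>0" for s
    proof -
      have "w s \<le> e"
      proof (rule wle)
        fix z j assume z: "z \<in> K" "j < pstar" "norm (z - Pistar j) \<le> s"
        then have "dist z (Pistar j) < d" using s by (simp add: dist_norm)
        then have "dist (L z) (L (Pistar j)) < e" using d z PiK by blast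
        then show "L z - L (Pistar j) \<le> e" by (simp add: dist_real_def)
      qed (use s in auto)
      then show ?thesis using s unfolding b_def by simp
    qed
    then show ?thesis using d \<epsilon>0p by (intro exI[of _ "min d \<epsilon>0"]) auto
  qed
  obtain \<alpha>1 where K1: "Kinf \<alpha>1" and b1: "\<forall>s>0. b s \<le> \<alpha>1 s"
    using majorant[of b M] bnd lim0 by blast
  show ?thesis
  proof (intro exI[of _ \<alpha>1] conjI K1 allI impI ballI)
    fix \<epsilon> :: real and T :: nat and xh uh
    assume \<epsilon>: "\<epsilon> > 0" and xh: "xh \<in> X" and adm: "admissible f X U T xh uh"
      and close: "\<forall>k<T. orbit_dist pstar Pistar (traj f uh xh k, uh k) \<le> \<epsilon>"
    define z where "z = (\<lambda>k. (traj f uh xh k, uh k))"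
    have zK: "z k \<in> K" if "k < T" for k
      using adm that unfolding admissible_def z_def K_def by auto
    have Fz: "F (z k) = fst (z (Suc k))" for k unfolding F_def z_def by simp
    have sum_eq: "(\<Sum>k<T. ell (traj f uh xh k) (uh k)) = (\<Sum>k<T. L (z k))"
      unfolding L_def z_def by simp
    have rhs_nn: "0 \<le> (real T + real pstar - 1) * ls" using p1 ls_nn by simp
    have a1pos: "b \<epsilon> \<le> \<alpha>1 \<epsilon>" using b1 \<epsilon> by blast
    have main: "(\<Sum>k<T. L (z k)) \<le> (real T + real pstar - 1) * ls + real T * \<alpha>1 \<epsilon>"
    proof (cases "\<epsilon>0 \<le> \<epsilon>")
      case True
      then have "M \<le> \<alpha>1 \<epsilon>" using a1pos unfolding b_def by simp
      have "(\<Sum>k<T. L (z k)) \<le> real (card {..<T}) * M" using M zK by (intro sum_bounded_above) auto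
      also have "\<dots> \<le> real T * \<alpha>1 \<epsilon>" using \<open>M \<le> \<alpha>1 \<epsilon>\<close> by (simp add: mult_left_mono)
      finally show ?thesis using rhs_nn by linarith
    next
      case False
      then have w\<epsilon>: "w \<epsilon> \<le> \<alpha>1 \<epsilon>" using a1pos unfolding b_def by simp
      define J where "J = (\<lambda>k. SOME j. j<pstar \<and> orbit_dist pstar Pistar (z k) = norm (z k - Pistar j))"
      have J: "J k < pstar \<and> orbit_dist pstar Pistar (z k) = norm (z k - Pistar (J k))" for k
        unfolding J_def by (rule someI_ex) (use od_ex[OF p1] in blast)
      have Jc: "norm (z k - Pistar (J k)) \<le> \<epsilon>" if "k < T" for k
        using J[of k] close that unfolding z_def by metis
      have link: "xs (sx (J k)) = xs (J (Suc k))" if k: "Suc k < T" for k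
      proof -
        have FP: "F (Pistar (J k)) = xs (sx (J k))" using step[of "J k"] J[of k] Pi_eq[of "J k"]
          unfolding F_def by simp
        have "dist (z k) (Pistar (J k)) < d1" using Jc[of k] k False
          unfolding \<epsilon>0_def by (simp add: dist_norm)
        then have h1: "dist (F (z k)) (xs (sx (J k))) < \<delta>S/2"
          using d1(2) zK[of k] k PiK[of "J k"] J[of k] FP by (metis Suc_lessD dist_commute)
        have "norm (fst (z (Suc k) - Pistar (J (Suc k)))) \<le> norm (z (Suc k) - Pistar (J (Suc k)))"
          by (metis norm_fst_le prod.collapse)
        then have h2: "dist (F (z k)) (xs (J (Suc k))) < \<delta>S/2"
          using Jc[OF k] False unfolding \<epsilon>0_def Fz dist_norm xs_def by simp
        have "dist (xs (sx (J k))) (xs (J (Suc k))) < \<delta>S"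
          using h1 h2 dist_triangle2[of "xs (sx (J k))" "xs (J (Suc k))" "F (z k)"] by (simp add: dist_commute)
        then show ?thesis using \<delta>S(2) sx_lt J by blast
      qed
      have Lz: "L (z k) \<le> ls + (lam (xs (sx (J k))) - lam (xs (J k))) + \<alpha>1 \<epsilon>" if "k < T" for k
        using wub[OF zK[OF that] conjunct1[OF J[of k]] Jc[OF that]] eqj[OF conjunct1[OF J[of k]]] w\<epsilon>
        by simp
      have tel2: "(\<Sum>k<Suc n. lam (xs (sx (J k))) - lam (xs (J k))) = lam (xs (sx (J n))) - lam (xs (J 0))"
        if "Suc n \<le> T" for n
        using that
      proof (induction n)
        case 0 then show ?case by simp
      next
        case (Suc n)
        then have "xs (sx (J n)) = xs (J (Suc n))" using link by simp
        then show ?case using Suc by simp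
      qed
      show ?thesis
      proof (cases T)
        case 0 then show ?thesis using rhs_nn by simp
      next
        case (Suc n)
        have "(\<Sum>k<T. L (z k)) \<le> (\<Sum>k<T. ls + (lam (xs (sx (J k))) - lam (xs (J k))) + \<alpha>1 \<epsilon>)"
          by (intro sum_mono) (use Lz in auto)
        also have "\<dots> = real T * ls + (\<Sum>k<T. lam (xs (sx (J k))) - lam (xs (J k))) + real T * \<alpha>1 \<epsilon>"
          by (simp add: sum.distrib)
        also have "(\<Sum>k<T. lam (xs (sx (J k))) - lam (xs (J k))) = lam (xs (sx (J n))) - lam (xs (J 0))"
          using tel2[of n] Suc by simp
        finally have s1: "(\<Sum>k<T. L (z k)) \<le> real T * ls + (lam (xs (sx (J n))) - lam (xs (J 0))) + real T * \<alpha>1 \<epsilon>" .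
        have "lam (xs (sx (J n))) - lam (xs (J 0)) \<le> (real pstar - 1) * ls"
          using claimL sx_lt J by blast
        then show ?thesis using s1 by (simp add: algebra_simps)
      qed
    qed
    then show "(\<Sum>k<T. ell (traj f uh xh k) (uh k)) \<le> (real T + real pstar - 1) * ell_star f X U ell + real T * \<alpha>1 \<epsilon>"
      using sum_eq unfolding ls_def by simp
  qed
qed

end
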